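(* Let $m$ be an even positive integer. Then $|M_1^m|=|M_2^m|$.
   Context: With integers $x,z>0$, $y$: $M_1^m=\{\begin{bmatrix}x&y\\0&z\end{bmatrix}: xz=m,\ 0\leq y<z,\ \gcd(x,y,z)=1,\ x\text{ odd}\}$, $S_1^m=\{\begin{bmatrix}x&y\\0&z\end{bmatrix}: xz=m,\ 0\leq y<z,\ \gcd(x,y,z)=1,\ z\text{ odd}\}$, $S_2^m=\{2^{-1/2}\begin{bmatrix}x&y\\0&z\end{bmatrix}: xz=2m,\ 0\leq y<z,\ \gcd(x,y,z)=1,\ x,z\text{ even}\}$, $M_2^m=S_1^m\cup S_2^m$. *)

theory Defs
  imports "HOL-Analysis.Analysis"
begin

definition utmat :: "real \<Rightarrow> real \<Rightarrow> real \<Rightarrow> real^2^2" where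
  "utmat x y z = vector [vector [x, y], vector [0, z]]"

definition M1 :: "int \<Rightarrow> (real^2^2) set" where
  "M1 m = {utmat (of_int x) (of_int y) (of_int z) | x y z.
      x > 0 \<and> z > 0 \<and> x * z = m \<and> 0 \<le> y \<and> y < z \<and> gcd (gcd x y) z = 1 \<and> odd x}"

definition S1 :: "int \<Rightarrow> (real^2^2) set" where
  "S1 m = {utmat (of_int x) (of_int y) (of_int z) | x y z.
      x > 0 \<and> z > 0 \<and> x * z = m \<and> 0 \<le> y \<and> y < z \<and> gcd (gcd x y) z = 1 \<and> odd z}"

definition S2 :: "int \<Rightarrow> (real^2^2) set" where
  "S2 m = {(1 / sqrt 2) *\<^sub>R utmat (of_int x) (of_int y) (of_int z) | x y z.
      x > 0 \<and> z > 0 \<and> x * z = 2 * m \<and> 0 \<le> y \<and> y < z \<and> gcd (gcd x y) z = 1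
      \<and> even x \<and> even z}"

definition M2 :: "int \<Rightarrow> (real^2^2) set" where
  "M2 m = S1 m \<union> S2 m"

end

theory Submission
  imports Defs
begin

definition A1 :: "int \<Rightarrow> (int*int*int) set" where
  "A1 m = {(x,y,z). x > 0 \<and> z > 0 \<and> x * z = m \<and> 0 \<le> y \<and> y < z \<and> gcd (gcd x y) z = 1 \<and> odd x}"
definition B1 :: "int \<Rightarrow> (int*int*int) set" where
  "B1 m = {(x,y,z). x > 0 \<and> z > 0 \<and> x * z = m \<and> 0 \<le> y \<and> y < z \<and> gcd (gcd x y) z = 1 \<and> odd z}"
definition B2 :: "int \<Rightarrow> (int*int*int) set" where
  "B2 m = {(x,y,z). x > 0 \<and> z > 0 \<and> x * z = 2 * m \<and> 0 \<le> y \<and> y < z \<and> gcd (gcd x y) z = 1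
      \<and> even x \<and> even z}"

lemma utmat_comp: "(utmat a b c)$1$1 = a" "(utmat a b c)$1$2 = b" "(utmat a b c)$2$2 = c"
  unfolding utmat_def by simp_all

lemma utmat_eq: "utmat a b c = utmat a' b' c' \<Longrightarrow> a = a' \<and> b = b' \<and> c = c'"
  by (metis utmat_comp)

lemma gcd2: "odd (w::int) \<Longrightarrow> gcd (2 * a) w = gcd a w"
  by (simp add: gcd_mult_left_left_cancel)

lemma gcd_oddx: "odd (x::int) \<Longrightarrow> gcd (gcd x (2*a)) (2*b) = gcd (gcd x a) b"
proof -
  assume h: "odd x"
  have "gcd (gcd x (2*a)) (2*b) = gcd x (gcd (2*a) (2*b))" by (simp add: gcd.assoc)
  also have "\<dots> = gcd x (2 * gcd a b)" using gcd_mult_distrib_int[of 2 a b] by simp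
  also have "\<dots> = gcd x (gcd a b)" using gcd2[OF h] by (simp add: gcd.commute)
  finally show ?thesis by (simp add: gcd.assoc)
qed

lemma gcd_oddy: "odd (y::int) \<Longrightarrow> gcd (gcd (2*x) y) z = gcd (gcd x y) z"
  by (simp add: gcd2)

lemma gcd_oddz: assumes h: "odd (z::int)" shows "gcd (gcd (2*x) y) z = gcd (gcd x y) z"
proof -
  have "odd (gcd y z)" using h by (meson dvd_trans gcd_dvd2)
  then show ?thesis by (simp add: gcd.assoc gcd2)
qed

lemma fin_box:
  assumes "n > 0"
  shows "finite {(x,y,z). x > 0 \<and> z > 0 \<and> x * z = (n::int) \<and> 0 \<le> y \<and> y < z \<and> P x y z}"
proof -
  have sub: "{(x,y,z). x > 0 \<and> z > 0 \<and> x * z = (n::int) \<and> 0 \<le> y \<and> y < z \<and> P x y z}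
     \<subseteq> {1..n} \<times> {0..n} \<times> {1..n}"
  proof (rule subsetI)
    fix t assume t: "t \<in> {(x,y,z). x > 0 \<and> z > 0 \<and> x * z = (n::int) \<and> 0 \<le> y \<and> y < z \<and> P x y z}"
    obtain x y z where tt: "t = (x,y,z)" by (cases t)
    have a: "0 < x" "0 < z" "n = x * z" "0 \<le> y" "y < z" using t tt by auto
    moreover have "x \<le> x*z" "z \<le> x*z" using \<open>0<x\<close> \<open>0<z\<close> by (simp_all add: mult_le_cancel_left1 mult_le_cancel_right1)
    ultimately have "1 \<le> x \<and> x \<le> n \<and> 0 \<le> y \<and> y \<le> n \<and> 1 \<le> z \<and> z \<le> n" by linarith
    then show "t \<in> {1..n} \<times> {0..n} \<times> {1..n}" using tt by simp
  qed
  show ?thesis by (rule finite_subset[OF sub]) auto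
qed

lemma finA1: "m > 0 \<Longrightarrow> finite (A1 m)" unfolding A1_def by (rule fin_box)
lemma finB1: "m > 0 \<Longrightarrow> finite (B1 m)" unfolding B1_def by (rule fin_box)
lemma finB2: "m > 0 \<Longrightarrow> finite (B2 m)" unfolding B2_def by (rule fin_box) simp

lemma odd_case:
  assumes "odd m"
  shows "A1 m = B1 m" "B2 m = {}"
proof -
  show "A1 m = B1 m" unfolding A1_def B1_def using assms by auto
  show "B2 m = {}"
  proof (rule ccontr)
    assume "B2 m \<noteq> {}"
    then obtain x y z where "x * z = 2 * m" "even x" "even z" unfolding B2_def by auto
    then obtain a b where "x = 2*a" "z = 2*b" by blast
    with \<open>x * z = 2 * m\<close> have "m = 2*(a*b)" by simp
    with assms show False by simp
  qed
qed

lemma A1_even: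
  assumes "even m"
  shows "A1 m \<inter> {t. even (fst (snd t))} = (\<lambda>(x,y,z). (x,2*y,2*z)) ` A1 (m div 2)"
proof
  show "A1 m \<inter> {t. even (fst (snd t))} \<subseteq> (\<lambda>(x,y,z). (x,2*y,2*z)) ` A1 (m div 2)"
  proof clarify
    fix x y z assume h: "(x,y,z) \<in> A1 m" and ey: "even (fst (snd (x,y,z)))"
    then have hx: "x > 0" "z > 0" "x * z = m" "0 \<le> y" "y < z" "gcd (gcd x y) z = 1" "odd x"
      unfolding A1_def by auto
    have "even z" using hx assms by auto
    then obtain c where c: "z = 2*c" by blast
    from ey obtain b where b: "y = 2*b" by auto
    have "(x,b,c) \<in> A1 (m div 2)" unfolding A1_def using hx b c gcd_oddx[OF hx(7), of b c] by auto
    then show "(x,y,z) \<in> (\<lambda>(x,y,z). (x,2*y,2*z)) ` A1 (m div 2)" using b c by force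
  qed
  show "(\<lambda>(x,y,z). (x,2*y,2*z)) ` A1 (m div 2) \<subseteq> A1 m \<inter> {t. even (fst (snd t))}"
    using assms gcd_oddx unfolding A1_def by auto
qed

lemma A1_odd:
  assumes "even m"
  shows "A1 m \<inter> {t. odd (fst (snd t))} = (\<lambda>(x,y,z). (x div 2,y,z)) ` {t \<in> B2 m. fst t mod 4 = 2}"
proof
  show "A1 m \<inter> {t. odd (fst (snd t))} \<subseteq> (\<lambda>(x,y,z). (x div 2,y,z)) ` {t \<in> B2 m. fst t mod 4 = 2}"
  proof clarify
    fix x y z assume h: "(x,y,z) \<in> A1 m" and oy: "odd (fst (snd (x,y,z)))"
    then have hx: "x > 0" "z > 0" "x * z = m" "0 \<le> y" "y < z" "gcd (gcd x y) z = 1" "odd x"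
      unfolding A1_def by auto
    have "even z" using hx assms by auto
    have "(2*x,y,z) \<in> {t \<in> B2 m. fst t mod 4 = 2}" unfolding B2_def
      using hx oy \<open>even z\<close> gcd_oddy[of y x z] \<open>odd x\<close> by auto presburger
    then show "(x,y,z) \<in> (\<lambda>(x,y,z). (x div 2,y,z)) ` {t \<in> B2 m. fst t mod 4 = 2}" by force
  qed
  show "(\<lambda>(x,y,z). (x div 2,y,z)) ` {t \<in> B2 m. fst t mod 4 = 2} \<subseteq> A1 m \<inter> {t. odd (fst (snd t))}"
  proof clarify
    fix x y z assume h: "(x,y,z) \<in> B2 m" "fst (x,y,z) mod 4 = 2"
    then have hx: "x > 0" "z > 0" "x * z = 2*m" "0 \<le> y" "y < z" "gcd (gcd x y) z = 1" "even x" "even z"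
      unfolding B2_def by auto
    then obtain a where a: "x = 2*a" by blast
    have "x mod 4 = 2" using h(2) by simp
    then have oa: "odd a" using a by presburger
    have oy: "odd y" using hx by (metis dvd_gcdD1 dvd_gcdD2 gcd_greatest gcd_unique odd_one)
    show "(x div 2, y, z) \<in> A1 m \<inter> {t. odd (fst (snd t))}" unfolding A1_def
      using hx a oa oy gcd_oddy[of y a z] by auto
  qed
qed

lemma B1_half:
  assumes "even m"
  shows "B1 m = (\<lambda>(x,y,z). (2*x,y,z)) ` B1 (m div 2)"
proof
  show "B1 m \<subseteq> (\<lambda>(x,y,z). (2*x,y,z)) ` B1 (m div 2)"
  proof clarify
    fix x y z assume h: "(x,y,z) \<in> B1 m"
    then have hx: "x > 0" "z > 0" "x * z = m" "0 \<le> y" "y < z" "gcd (gcd x y) z = 1" "odd z"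
      unfolding B1_def by auto
    have "even x" using hx assms by auto
    then obtain a where a: "x = 2*a" by blast
    have "(a,y,z) \<in> B1 (m div 2)" unfolding B1_def using hx a gcd_oddz[OF hx(7), of a y] by auto
    then show "(x,y,z) \<in> (\<lambda>(x,y,z). (2*x,y,z)) ` B1 (m div 2)" using a by force
  qed
  show "(\<lambda>(x,y,z). (2*x,y,z)) ` B1 (m div 2) \<subseteq> B1 m"
    using assms gcd_oddz unfolding B1_def by auto
qed

lemma B2_half:
  assumes "even m"
  shows "{t \<in> B2 m. fst t mod 4 \<noteq> 2} = (\<lambda>(x,y,z). (2*x,y,z)) ` B2 (m div 2)"
proof
  show "{t \<in> B2 m. fst t mod 4 \<noteq> 2} \<subseteq> (\<lambda>(x,y,z). (2*x,y,z)) ` B2 (m div 2)"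
  proof clarify
    fix x y z assume h: "(x,y,z) \<in> B2 m" "fst (x,y,z) mod 4 \<noteq> 2"
    then have hx: "x > 0" "z > 0" "x * z = 2*m" "0 \<le> y" "y < z" "gcd (gcd x y) z = 1" "even x" "even z"
      unfolding B2_def by auto
    then obtain a where a: "x = 2*a" by blast
    have "x mod 4 \<noteq> 2" using h(2) by simp
    then have ea: "even a" using a by presburger
    have oy: "odd y" using hx by (metis dvd_gcdD1 dvd_gcdD2 gcd_greatest gcd_unique odd_one)
    have "(a,y,z) \<in> B2 (m div 2)" unfolding B2_def using hx a ea oy gcd_oddy[of y a z] assms by auto
    then show "(x,y,z) \<in> (\<lambda>(x,y,z). (2*x,y,z)) ` B2 (m div 2)" using a by force
  qed
  show "(\<lambda>(x,y,z). (2*x,y,z)) ` B2 (m div 2) \<subseteq> {t \<in> B2 m. fst t mod 4 \<noteq> 2}"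
  proof (rule image_subsetI)
    fix t assume "t \<in> B2 (m div 2)"
    then obtain x y z where tt: "t = (x,y,z)" and h: "(x,y,z) \<in> B2 (m div 2)" by (cases t) auto
    then have hx: "x > 0" "z > 0" "x * z = 2*(m div 2)" "0 \<le> y" "y < z" "gcd (gcd x y) z = 1" "even x" "even z"
      unfolding B2_def by auto
    have oy: "odd y" using hx by (metis dvd_gcdD1 dvd_gcdD2 gcd_greatest gcd_unique odd_one)
    have "(2*x, y, z) \<in> {t \<in> B2 m. fst t mod 4 \<noteq> 2}" unfolding B2_def
      using hx oy gcd_oddy[of y x z] assms by auto
    then show "(\<lambda>(x,y,z). (2*x,y,z)) t \<in> {t \<in> B2 m. fst t mod 4 \<noteq> 2}" using tt by simp
  qed
qed

lemma card_A1:
  assumes "even m" "m > 0"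
  shows "card (A1 m) = card (A1 (m div 2)) + card {t \<in> B2 m. fst t mod 4 = 2}"
proof -
  have un: "A1 m = (A1 m \<inter> {t. even (fst (snd t))}) \<union> (A1 m \<inter> {t. odd (fst (snd t))})" by auto
  have "card (A1 m) = card (A1 m \<inter> {t. even (fst (snd t))}) + card (A1 m \<inter> {t. odd (fst (snd t))})"
    by (subst un, rule card_Un_disjoint) (use finA1[OF assms(2)] in auto)
  moreover have "card (A1 m \<inter> {t. even (fst (snd t))}) = card (A1 (m div 2))"
    unfolding A1_even[OF assms(1)] by (rule card_image) (auto simp: inj_on_def)
  moreover have "card (A1 m \<inter> {t. odd (fst (snd t))}) = card {t \<in> B2 m. fst t mod 4 = 2}"
    unfolding A1_odd[OF assms(1)]
  proof (rule card_image)
    show "inj_on (\<lambda>(x, y, z). (x div 2, y, z)) {t \<in> B2 m. fst t mod 4 = 2}"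
      by (auto simp: inj_on_def B2_def elim!: evenE)
  qed
  ultimately show ?thesis by simp
qed

lemma card_B2:
  assumes "even m" "m > 0"
  shows "card (B2 m) = card {t \<in> B2 m. fst t mod 4 = 2} + card (B2 (m div 2))"
proof -
  have un: "B2 m = {t \<in> B2 m. fst t mod 4 = 2} \<union> {t \<in> B2 m. fst t mod 4 \<noteq> 2}" by auto
  have "card (B2 m) = card {t \<in> B2 m. fst t mod 4 = 2} + card {t \<in> B2 m. fst t mod 4 \<noteq> 2}"
    by (subst un, rule card_Un_disjoint) (use finB2[OF assms(2)] in auto)
  moreover have "card {t \<in> B2 m. fst t mod 4 \<noteq> 2} = card (B2 (m div 2))"
    unfolding B2_half[OF assms(1)] by (rule card_image) (auto simp: inj_on_def)
  ultimately show ?thesis by simp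
qed

lemma card_B1:
  assumes "even m"
  shows "card (B1 m) = card (B1 (m div 2))"
  unfolding B1_half[OF assms] by (rule card_image) (auto simp: inj_on_def)

lemma main_count:
  "m > 0 \<Longrightarrow> even m \<Longrightarrow> card (A1 m) = card (B1 m) + card (B2 m)"
proof (induction "nat m" arbitrary: m rule: less_induct)
  case less
  have h: "m div 2 > 0" using less.prems by auto
  show ?case
  proof (cases "even (m div 2)")
    case True
    have "nat (m div 2) < nat m" using less.prems by auto
    then have ih: "card (A1 (m div 2)) = card (B1 (m div 2)) + card (B2 (m div 2))"
      using less.hyps h True by blast
    show ?thesis using card_A1[OF less.prems(2,1)] card_B2[OF less.prems(2,1)] card_B1[OF less.prems(2)] ih
      by simp
  next
    case False
    show ?thesis using card_A1[OF less.prems(2,1)] card_B2[OF less.prems(2,1)] card_B1[OF less.prems(2)]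
      odd_case[OF False] by simp
  qed
qed

definition FF :: "int*int*int \<Rightarrow> real^2^2" where
  "FF = (\<lambda>(x,y,z). utmat (of_int x) (of_int y) (of_int z))"
definition GG :: "int*int*int \<Rightarrow> real^2^2" where
  "GG = (\<lambda>(x,y,z). (1 / sqrt 2) *\<^sub>R utmat (of_int x) (of_int y) (of_int z))"

lemma img3: "{f x y z | x y z. P x y z} = (\<lambda>(x,y,z). f x y z) ` {(x,y,z). P x y z}"
  by (auto simp: image_iff) blast

lemma M1_img: "M1 m = FF ` A1 m"
  unfolding M1_def A1_def FF_def by (rule img3)
lemma S1_img: "S1 m = FF ` B1 m"
  unfolding S1_def B1_def FF_def by (rule img3)
lemma S2_img: "S2 m = GG ` B2 m"
  unfolding S2_def B2_def GG_def by (rule img3)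

lemma FF_inj: "inj_on FF A"
  unfolding inj_on_def FF_def by (auto dest: utmat_eq)

lemma GG_comp: "(GG (x,y,z))$1$1 = of_int x / sqrt 2" "(GG (x,y,z))$1$2 = of_int y / sqrt 2"
   "(GG (x,y,z))$2$2 = of_int z / sqrt 2"
  unfolding GG_def by (simp_all add: utmat_comp)

lemma GG_inj: "inj_on GG A"
proof (rule inj_onI)
  fix s t assume "s \<in> A" "t \<in> A" "GG s = GG t"
  obtain x y z where s: "s = (x,y,z)" by (cases s)
  obtain x' y' z' where t: "t = (x',y',z')" by (cases t)
  have "of_int x / sqrt 2 = (of_int x' / sqrt 2 :: real)" "of_int y / sqrt 2 = (of_int y' / sqrt 2 :: real)"
    "of_int z / sqrt 2 = (of_int z' / sqrt 2 :: real)"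
    using \<open>GG s = GG t\<close> GG_comp s t by metis+
  then show "s = t" using s t by simp
qed

lemma S_disj: "S1 m \<inter> S2 m = {}"
proof (rule ccontr)
  assume "S1 m \<inter> S2 m \<noteq> {}"
  then obtain s t where "s \<in> B1 m" "t \<in> B2 m" "FF s = GG t" unfolding S1_img S2_img by blast
  obtain x y z where s: "s = (x,y,z)" by (cases s)
  obtain x' y' z' where t: "t = (x',y',z')" by (cases t)
  have ht: "gcd (gcd x' y') z' = 1" "even x'" "even z'" using \<open>t \<in> B2 m\<close> t unfolding B2_def by auto
  have oy: "odd y'" using ht by (metis dvd_gcdD1 dvd_gcdD2 gcd_greatest gcd_unique odd_one)
  have "(FF s)$1$2 = of_int y" unfolding FF_def s by (simp add: utmat_comp)
  moreover have "(GG t)$1$2 = of_int y' / sqrt 2" unfolding t by (rule GG_comp)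
  ultimately have e: "(of_int y :: real) = of_int y' / sqrt 2" using \<open>FF s = GG t\<close> by simp
  have "(of_int y :: real)^2 = (of_int y')^2 / 2" unfolding e by (simp add: power_divide)
  then have "(of_int (2 * y^2) :: real) = of_int (y'^2)" by simp
  then have "2 * y^2 = y'^2" by linarith
  then have "even (y'^2)" by (metis dvd_triv_left)
  with oy show False by simp
qed

theorem lemma2p6:
  fixes m :: int
  assumes "m > 0" and "even m"
  shows "card (M1 m) = card (M2 m)"
proof -
  have "card (M1 m) = card (A1 m)" unfolding M1_img by (rule card_image[OF FF_inj])
  moreover have "card (S1 m) = card (B1 m)" unfolding S1_img by (rule card_image[OF FF_inj])
  moreover have "card (S2 m) = card (B2 m)" unfolding S2_img by (rule card_image[OF GG_inj])
  moreover have "card (M2 m) = card (S1 m) + card (S2 m)" unfolding M2_def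
    by (rule card_Un_disjoint) (use S_disj finB1[OF assms(1)] finB2[OF assms(1)] in \<open>auto simp: S1_img S2_img\<close>)
  ultimately show ?thesis using main_count[OF assms] by simp
qed

end
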